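(* Let $0<\lambda\le1$, $f\in\mathcal U(\lambda)$ with $f(z)=z+\sum_{k\ge2}a_kz^k$, and suppose $|a_2|=1+\lambda$. Then there is a real $\theta$ such that $f(z)=\dfrac{z}{1-a_2z+\lambda e^{i\theta}z^2}$ for $z\in\mathbb D$; more precisely, there is a real $\phi$ such that $$f(z)=\frac{z}{1-(1+\lambda)e^{i\phi}z+\lambda e^{2i\phi}z^2},\qquad z\in\mathbb D.$$
   Context: $\mathbb D=\{z\in\mathbb C:|z|<1\}$. $\mathcal A$ is the class of functions $f$ analytic in $\mathbb D$ with $f(z)=z+\sum_{k\ge2}a_kz^k$. For $f\in\mathcal A$ with $f(z)\ne0$ for $z\in\mathbb D\setminus\{0\}$, set $U_f(z)=\left(\frac{z}{f(z)}\right)^2f'(z)-1$. For $0<\lambda\le1$, $\mathcal U(\lambda)$ is the class of such $f\in\mathcal A$ with $|U_f(z)|<\lambda$ for all $z\in\mathbb D$. *)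

theory Defs
  imports "HOL-Analysis.Analysis"
begin

definition unit_disc :: "complex set" where
  "unit_disc = ball 0 1"

definition class_A :: "(complex \<Rightarrow> complex) \<Rightarrow> bool" where
  "class_A f \<longleftrightarrow> f holomorphic_on unit_disc \<and> f 0 = 0 \<and> deriv f 0 = 1"

definition taylor_coeff :: "(complex \<Rightarrow> complex) \<Rightarrow> nat \<Rightarrow> complex" where
  "taylor_coeff f k = (deriv ^^ k) f 0 / of_nat (fact k)"

definition U_op :: "(complex \<Rightarrow> complex) \<Rightarrow> complex \<Rightarrow> complex" where
  "U_op f z = (z / f z)^2 * deriv f z - 1"

text \<open>Class U(lambda). The bound is required on the punctured disc: at z = 0 the
  expression z/f(z) is a removable singularity with value 1, so U_f(0) = 0 < lambda
  holds automatically.\<close>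
definition class_U :: "real \<Rightarrow> (complex \<Rightarrow> complex) \<Rightarrow> bool" where
  "class_U lam f \<longleftrightarrow> class_A f \<and> (\<forall>z\<in>unit_disc - {0}. f z \<noteq> 0)
     \<and> (\<forall>z\<in>unit_disc - {0}. cmod (U_op f z) < lam)"

end

theory Submission
  imports Defs "HOL-Complex_Analysis.Complex_Analysis"
begin

lemma quad_aux:
  fixes s1 s2 a c :: complex and lam :: real
  assumes "0 < lam" "cmod s1 = 1" "cmod s2 = lam" "cmod (s1 + s2) = cmod s1 + cmod s2"
    "s1 + s2 = a" "s1 * s2 = lam * c"
  shows "\<exists>\<phi>::real. a = (1 + lam) * exp (\<i> * \<phi>) \<and> c = exp (2 * \<i> * \<phi>)"
proof -
  have "cmod s1 *\<^sub>R s2 = cmod s2 *\<^sub>R s1" using assms(4) norm_triangle_eq by blast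
  hence s2: "s2 = lam * s1" using assms by (simp add: scaleR_conv_of_real)
  have "s1 \<noteq> 0" using assms by auto
  define \<phi> where "\<phi> = Arg s1"
  have e: "exp (\<i> * \<phi>) = s1" unfolding \<phi>_def
    using cis_Arg[OF \<open>s1 \<noteq> 0\<close>] assms(2) by (simp add: cis_conv_exp sgn_div_norm)
  have e2: "exp (2 * \<i> * \<phi>) = s1^2"
    by (metis e exp_double mult.assoc power2_eq_square exp_add mult_2)
  have "a = (1 + lam) * s1" using assms(5) s2 by (simp add: algebra_simps)
  moreover have "c = s1^2" using assms(6) s2 assms(1)
    by (simp add: power2_eq_square)
  ultimately show ?thesis using e e2 by metis
qed

lemma quad_lemma:
  fixes a c :: complex and lam :: real
  assumes "0 < lam" "lam \<le> 1" "cmod a = 1 + lam" "cmod c = 1"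
    and nz: "\<forall>z\<in>ball 0 1. 1 - a * z + lam * c * z^2 \<noteq> 0"
  shows "\<exists>\<phi>::real. a = (1 + lam) * exp (\<i> * \<phi>) \<and> c = exp (2 * \<i> * \<phi>)"
proof -
  define s where "s = csqrt (a^2 - 4 * lam * c)"
  define s1 where "s1 = (a + s) / 2"
  define s2 where "s2 = (a - s) / 2"
  have sum: "s1 + s2 = a" unfolding s1_def s2_def by (simp add: field_simps)
  have prod: "s1 * s2 = lam * c"
  proof -
    have "s1 * s2 = (a^2 - s^2) / 4" unfolding s1_def s2_def by (simp add: field_simps power2_eq_square)
    also have "\<dots> = lam * c" unfolding s_def by simp
    finally show ?thesis .
  qed
  have fac: "1 - a * z + lam * c * z^2 = (1 - s1 * z) * (1 - s2 * z)" for z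
    using sum prod by (simp add: algebra_simps power2_eq_square flip: sum prod)
  have bnd: "cmod t \<le> 1" if "t = s1 \<or> t = s2" for t
  proof (rule ccontr)
    assume "\<not> cmod t \<le> 1"
    hence t1: "cmod t > 1" by simp
    hence "t \<noteq> 0" by auto
    have "cmod (1 / t) < 1" using t1 by (simp add: norm_divide divide_less_eq)
    hence "1 - a * (1/t) + lam * c * (1/t)^2 \<noteq> 0" using nz by (metis mem_ball_0)
    moreover have "(1 - s1 * (1/t)) * (1 - s2 * (1/t)) = 0" using that \<open>t \<noteq> 0\<close> by auto
    ultimately show False using fac by metis
  qed
  have b1: "cmod s1 \<le> 1" and b2: "cmod s2 \<le> 1" using bnd by auto
  have p: "cmod s1 * cmod s2 = lam" using prod assms by (metis norm_mult norm_of_real abs_of_pos mult.right_neutral)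
  have tri: "1 + lam \<le> cmod s1 + cmod s2" using sum assms(3) norm_triangle_ineq by metis
  have "(1 - cmod s1) * (1 - cmod s2) \<ge> 0" using b1 b2 by simp
  hence e: "(1 - cmod s1) * (1 - cmod s2) = 0" and eq: "cmod s1 + cmod s2 = 1 + lam"
    using tri p by (auto simp: algebra_simps)
  have teq: "cmod (s1 + s2) = cmod s1 + cmod s2" using eq sum assms(3) by simp
  from e have "cmod s1 = 1 \<or> cmod s2 = 1" by auto
  thus ?thesis
  proof
    assume h: "cmod s1 = 1"
    hence "cmod s2 = lam" using p by simp
    thus ?thesis using quad_aux[OF assms(1) h _ teq sum prod] by blast
  next
    assume h: "cmod s2 = 1"
    hence "cmod s1 = lam" using p by simp
    thus ?thesis using quad_aux[OF assms(1) h, of s1 a c] teq sum prod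
      by (simp add: add.commute mult.commute)
  qed
qed



lemma cont_eq_point:
  fixes F G :: "complex \<Rightarrow> complex"
  assumes "continuous_on S F" "continuous_on S G" "open S" "a \<in> S"
    "\<And>z. z \<in> S \<Longrightarrow> z \<noteq> a \<Longrightarrow> F z = G z"
  shows "F a = G a"
proof -
  have "(F \<longlongrightarrow> F a) (at a)" using assms continuous_on_eq_continuous_at isContD by blast
  moreover have "(G \<longlongrightarrow> G a) (at a)" using assms continuous_on_eq_continuous_at isContD by blast
  moreover have "eventually (\<lambda>z. F z = G z) (at a)"
    using assms(3,4,5) eventually_at_topological by blast
  ultimately have "(G \<longlongrightarrow> F a) (at a)" "(G \<longlongrightarrow> G a) (at a)"
    using tendsto_cong by blast+
  thus ?thesis using tendsto_unique[OF at_neq_bot] by blast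
qed



theorem theorem2p2:
  fixes lam :: real and f :: "complex \<Rightarrow> complex"
  assumes "0 < lam" and "lam \<le> 1"
    and "class_U lam f"
    and "cmod (taylor_coeff f 2) = 1 + lam"
  shows "(\<exists>\<theta>::real. \<forall>z\<in>unit_disc.
            f z = z / (1 - taylor_coeff f 2 * z + lam * exp (\<i> * \<theta>) * z^2))
       \<and> (\<exists>\<phi>::real. \<forall>z\<in>unit_disc.
            f z = z / (1 - (1 + lam) * exp (\<i> * \<phi>) * z + lam * exp (2 * \<i> * \<phi>) * z^2))"
proof -
  define D where "D = ball (0::complex) 1"
  have oD: "open D" and D0: "0 \<in> D" and cD: "convex D" unfolding D_def by auto
  have holf: "f holomorphic_on D" and f0: "f 0 = 0" and df0: "deriv f 0 = 1"
    and fnz: "\<And>z. z \<in> D \<Longrightarrow> z \<noteq> 0 \<Longrightarrow> f z \<noteq> 0"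
    and Ub: "\<And>z. z \<in> D \<Longrightarrow> z \<noteq> 0 \<Longrightarrow> cmod (U_op f z) < lam"
    using assms(3) unfolding class_U_def class_A_def unit_disc_def D_def by auto
  define a2 where "a2 = taylor_coeff f 2"
  define q where "q z = (if z = 0 then deriv f 0 else f z / z)" for z
  have holq: "q holomorphic_on D"
    by (rule pole_theorem_open_0[OF holf oD, of 0]) (auto simp: q_def f0)
  have fq: "f z = z * q z" for z by (auto simp: q_def f0)
  have q0: "q 0 = 1" by (simp add: q_def df0)
  have qnz: "q z \<noteq> 0" if "z \<in> D" for z
    using fnz[OF that] q0 by (cases "z = 0") (auto simp: q_def)
  define g where "g z = 1 / q z" for z
  have holg: "g holomorphic_on D" unfolding g_def using holq qnz by (auto intro!: holomorphic_intros)
  have g0: "g 0 = 1" by (simp add: g_def q0)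
  have gnz: "g z \<noteq> 0" if "z \<in> D" for z using qnz[OF that] by (simp add: g_def)
  have gf: "g z = z / f z" if "z \<noteq> 0" for z using that by (simp add: g_def fq)
  have holdg: "deriv g holomorphic_on D" using holg oD by (rule holomorphic_deriv)
  have holdf: "deriv f holomorphic_on D" using holf oD by (rule holomorphic_deriv)
  have holdq: "deriv q holomorphic_on D" using holq oD by (rule holomorphic_deriv)
  have Dg: "(g has_field_derivative deriv g z) (at z)" if "z \<in> D" for z
    using holomorphic_derivI[OF holg oD that] .
  have Ddg: "(deriv g has_field_derivative deriv (deriv g) z) (at z)" if "z \<in> D" for z
    using holomorphic_derivI[OF holdg oD that] .
  have Df: "(f has_field_derivative deriv f z) (at z)" if "z \<in> D" for z
    using holomorphic_derivI[OF holf oD that] .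
  have Dq: "(q has_field_derivative deriv q z) (at z)" if "z \<in> D" for z
    using holomorphic_derivI[OF holq oD that] .
  have dg: "deriv g z = 1 / f z - z * deriv f z / (f z)^2" if "z \<in> D" "z \<noteq> 0" for z
  proof -
    have "((\<lambda>w. w / f w) has_field_derivative (1 * f z - z * deriv f z) / (f z * f z)) (at z)"
      by (rule DERIV_divide[OF DERIV_ident Df[OF that(1)] fnz[OF that]])
    hence "(g has_field_derivative (1 * f z - z * deriv f z) / (f z * f z)) (at z)"
      by (rule has_field_derivative_transform_within_open[where S="D - {0}"])
         (use that oD in \<open>auto simp: gf\<close>)
    hence "deriv g z = (1 * f z - z * deriv f z) / (f z * f z)" by (rule DERIV_imp_deriv)
    thus ?thesis using fnz[OF that] by (simp add: field_simps power2_eq_square)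
  qed
  have Ug: "U_op f z = g z - z * deriv g z - 1" if "z \<in> D" "z \<noteq> 0" for z
    using fnz[OF that] that(2) unfolding U_op_def dg[OF that] gf[OF that(2)]
    by (simp add: field_simps power2_eq_square)
  have dfq: "deriv f z = q z + z * deriv q z" if "z \<in> D" for z
  proof -
    have "((\<lambda>w. w * q w) has_field_derivative (1 * q z + z * deriv q z)) (at z)"
      using DERIV_mult[OF DERIV_ident Dq[OF that]] by (simp add: mult.commute)
    hence "(f has_field_derivative (1 * q z + z * deriv q z)) (at z)"
      by (rule has_field_derivative_transform_within_open[where S=UNIV]) (auto simp: fq)
    thus ?thesis by (simp add: DERIV_imp_deriv)
  qed
  have ddf0: "deriv (deriv f) 0 = 2 * deriv q 0"
  proof -
    have "deriv (deriv f) 0 = deriv (\<lambda>z. q z + z * deriv q z) 0"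
      by (rule complex_derivative_transform_within_open[OF holdf _ oD D0])
         (use holq holdq dfq in \<open>auto intro!: holomorphic_intros\<close>)
    also have "\<dots> = 2 * deriv q 0"
      using DERIV_imp_deriv[OF DERIV_add[OF Dq[OF D0] DERIV_mult[OF DERIV_ident holomorphic_derivI[OF holdq oD D0]]]]
      by simp
    finally show ?thesis .
  qed
  have a2q: "a2 = deriv q 0"
    unfolding a2_def taylor_coeff_def using ddf0 by (simp add: numeral_2_eq_2)
  have dg0: "deriv g 0 = - a2"
  proof -
    have "(g has_field_derivative - (1 * deriv q 0) / (q 0 * q 0)) (at 0)"
      unfolding g_def using DERIV_inverse_fun[OF Dq[OF D0] qnz[OF D0]]
      by (simp add: divide_inverse)
    thus ?thesis using q0 a2q by (simp add: DERIV_imp_deriv)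
  qed
  define h where "h z = g z - z * deriv g z - 1" for z
  have holh: "h holomorphic_on D" unfolding h_def using holg holdg by (auto intro!: holomorphic_intros)
  have h0: "h 0 = 0" by (simp add: h_def g0)
  have dh0: "deriv h 0 = 0"
  proof -
    have "(h has_field_derivative deriv g 0 - (1 * deriv g 0 + deriv (deriv g) 0 * 0) - 0) (at 0)"
      unfolding h_def by (intro DERIV_diff DERIV_mult Dg Ddg D0 DERIV_ident DERIV_const)
    thus ?thesis by (simp add: DERIV_imp_deriv)
  qed
  have hb: "cmod (h z) < lam" if "z \<in> D" for z
    using Ub[OF that] Ug[OF that] h0 assms(1) by (cases "z = 0") (auto simp: h_def)
  define S where "S z = h z / lam" for z
  have holS: "S holomorphic_on ball 0 1" unfolding S_def using holh by (auto simp: D_def intro!: holomorphic_intros)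
  have S0: "S 0 = 0" by (simp add: S_def h0)
  have Sb: "cmod (S z) < 1" if "cmod z < 1" for z
    using hb[of z] that assms(1) by (simp add: S_def D_def norm_divide divide_less_eq)
  have dS0: "deriv S 0 = 0"
  proof -
    have "(S has_field_derivative deriv h 0 / lam) (at 0)"
      unfolding S_def by (intro DERIV_cdivide holomorphic_derivI[OF holh oD D0])
    thus ?thesis using dh0 by (simp add: DERIV_imp_deriv)
  qed
  obtain H where holH: "H holomorphic_on ball 0 1" and SH: "\<And>z. cmod z < 1 \<Longrightarrow> S z = z * H z"
    and dSH: "deriv S 0 = H 0"
    using Schwarz3[OF holS S0] by blast
  have H0: "H 0 = 0" using dSH dS0 by simp
  have Slt: "cmod (S z) < cmod z" if z1: "cmod z < 1" and z0: "z \<noteq> 0" for z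
  proof -
    have le: "cmod (S z) \<le> cmod z" using Schwarz_Lemma(1)[OF holS S0 Sb that(1)] .
    have "cmod (S z) \<noteq> cmod z"
    proof
      assume "cmod (S z) = cmod z"
      then obtain \<alpha> where \<alpha>: "\<forall>w. cmod w < 1 \<longrightarrow> S w = \<alpha> * w" "cmod \<alpha> = 1"
        using Schwarz_Lemma(3)[OF holS S0 Sb z1] z1 z0 by blast
      have "deriv S 0 = deriv (\<lambda>w. \<alpha> * w) 0"
        by (rule complex_derivative_transform_within_open[of _ "ball 0 1"])
           (use holS \<alpha> in \<open>auto intro!: holomorphic_intros\<close>)
      hence "deriv S 0 = \<alpha>" by simp
      thus False using dS0 \<alpha>(2) by simp
    qed
    thus ?thesis using le by simp
  qed
  have Hb: "cmod (H z) < 1" if "cmod z < 1" for z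
  proof (cases "z = 0")
    case True thus ?thesis using H0 by simp
  next
    case False
    have "cmod z * cmod (H z) < cmod z * 1" using Slt[OF that False] SH[OF that] by (simp add: norm_mult)
    thus ?thesis using False by (simp add: mult_less_cancel_left)
  qed
  obtain W where holW: "W holomorphic_on ball 0 1" and HW: "\<And>z. cmod z < 1 \<Longrightarrow> H z = z * W z"
    and dHW: "deriv H 0 = W 0"
    using Schwarz3[OF holH H0] by blast
  have hW: "h z = lam * z^2 * W z" if "z \<in> D" for z :: complex
  proof -
    have "cmod z < 1" using that by (simp add: D_def)
    hence "S z = z^2 * W z" using SH HW by (simp add: power2_eq_square)
    thus ?thesis using assms(1) by (simp add: S_def field_simps)
  qed
  have Wle: "cmod (W z) \<le> 1" if "z \<in> D" for z
  proof (cases "z = 0")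
    case True thus ?thesis using Schwarz_Lemma(2)[OF holH H0 Hb, of 0] dHW by simp
  next
    case False
    have z1: "cmod z < 1" using that by (simp add: D_def)
    have "cmod z * cmod (W z) \<le> cmod z * 1" using Schwarz_Lemma(1)[OF holH H0 Hb z1] HW[OF z1] by (simp add: norm_mult)
    thus ?thesis using False by (simp add: mult_le_cancel_left)
  qed
  define G where "G z = g z - 1 + a2 * z" for z
  have holG: "G holomorphic_on ball 0 1" unfolding G_def using holg by (auto simp: D_def intro!: holomorphic_intros)
  have G0: "G 0 = 0" by (simp add: G_def g0)
  obtain K where holK: "K holomorphic_on ball 0 1" and GK: "\<And>z. cmod z < 1 \<Longrightarrow> G z = z * K z"
    and dGK: "deriv G 0 = K 0"
    using Schwarz3[OF holG G0] by blast
  have K0: "K 0 = 0"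
  proof -
    have "(G has_field_derivative deriv g 0 - 0 + a2 * 1) (at 0)"
      unfolding G_def by (intro DERIV_add DERIV_diff Dg D0 DERIV_const DERIV_cmult DERIV_ident)
    thus ?thesis using dGK dg0 by (simp add: DERIV_imp_deriv)
  qed
  have holK': "K holomorphic_on D" using holK by (simp add: D_def)
  have holdK: "deriv K holomorphic_on D" using holK' oD by (rule holomorphic_deriv)
  have gK: "g z = 1 - a2 * z + z * K z" if "z \<in> D" for z
    using GK[of z] that by (simp add: D_def G_def algebra_simps)
  have dK': "deriv K w = - lam * W w" if w: "w \<in> D" "w \<noteq> 0" for w
  proof -
    have "((\<lambda>u. G u / u) has_field_derivative (deriv G w * w - G w * 1) / (w * w)) (at w)"
      by (rule DERIV_divide[OF holomorphic_derivI[OF holG] DERIV_ident w(2)]) (use w in \<open>auto simp: D_def\<close>)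
    hence "(K has_field_derivative (deriv G w * w - G w * 1) / (w * w)) (at w)"
      by (rule has_field_derivative_transform_within_open[where S="D - {0}"])
         (use w oD GK in \<open>auto simp: D_def\<close>)
    hence e1: "deriv K w = (deriv G w * w - G w) / (w * w)" by (simp add: DERIV_imp_deriv)
    have "(G has_field_derivative deriv g w - 0 + a2 * 1) (at w)"
      unfolding G_def by (intro DERIV_add DERIV_diff Dg w DERIV_const DERIV_cmult DERIV_ident)
    hence e2: "deriv G w = deriv g w + a2" by (simp add: DERIV_imp_deriv)
    have "deriv K w = - h w / w^2" using e1 e2 w(2) by (simp add: G_def h_def field_simps power2_eq_square)
    thus "deriv K w = - lam * W w" using hW[OF w(1)] w(2) by (simp add: field_simps power2_eq_square)
  qed
  have dK: "deriv K z = - lam * W z" if "z \<in> D" for z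
  proof (cases "z = 0")
    case False thus ?thesis using dK' that by blast
  next
    case True
    have "deriv K 0 = - lam * W 0"
    proof (rule cont_eq_point[OF _ _ oD D0])
      show "continuous_on D (deriv K)" using holdK holomorphic_on_imp_continuous_on by blast
      have "continuous_on D W" using holW holomorphic_on_imp_continuous_on by (auto simp: D_def)
      thus "continuous_on D (\<lambda>z. - lam * W z)" by (intro continuous_intros)
    qed (use dK' in auto)
    thus ?thesis using True by simp
  qed
  have DK: "(K has_field_derivative - lam * W z) (at z)" if "z \<in> D" for z
    using holomorphic_derivI[OF holK' oD that] dK[OF that] by simp
  have fg: "f z = z / g z" if "z \<in> D" for z
  proof (cases "z = 0")
    case True thus ?thesis using f0 by simp
  next
    case False thus ?thesis using gf[OF False] fnz[OF that False] by simp
  qed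
  have main: "\<exists>c::complex. cmod c = 1 \<and> (\<forall>z\<in>D. g z = 1 - a2 * z + lam * c * z^2)"
  proof (cases "(\<exists>z. cmod z < 1 \<and> z \<noteq> 0 \<and> cmod (H z) = cmod z) \<or> cmod (deriv H 0) = 1")
    case True
    then obtain \<alpha> where \<alpha>: "\<And>z. cmod z < 1 \<Longrightarrow> H z = \<alpha> * z" "cmod \<alpha> = 1"
      using Schwarz_Lemma(3)[OF holH H0 Hb, of 0] by auto
    have W': "W z = \<alpha>" if "z \<in> D" "z \<noteq> 0" for z
    proof -
      have "cmod z < 1" using that by (simp add: D_def)
      hence "z * W z = z * \<alpha>" using \<alpha>(1) HW by (simp add: mult.commute)
      thus ?thesis using that(2) by simp
    qed
    have Wa: "W z = \<alpha>" if "z \<in> D" for z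
    proof (cases "z = 0")
      case False thus ?thesis using W' that by blast
    next
      case True
      have "W 0 = (\<lambda>_. \<alpha>) 0"
      proof (rule cont_eq_point[OF _ _ oD D0])
        show "continuous_on D W" using holW holomorphic_on_imp_continuous_on by (auto simp: D_def)
      qed (use W' in auto)
      thus ?thesis using True by simp
    qed
    have "\<exists>c. \<forall>z\<in>D. K z + lam * \<alpha> * z = c"
    proof (rule has_field_derivative_zero_constant[OF cD])
      fix z assume z: "z \<in> D"
      have "((\<lambda>z. K z + lam * \<alpha> * z) has_field_derivative - lam * W z + lam * \<alpha> * 1) (at z)"
        by (intro DERIV_add DK z DERIV_cmult DERIV_ident)
      thus "((\<lambda>z. K z + lam * \<alpha> * z) has_field_derivative 0) (at z within D)"
        using Wa[OF z] by (simp add: has_field_derivative_at_within)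
    qed
    then obtain c where c: "\<And>z. z \<in> D \<Longrightarrow> K z + lam * \<alpha> * z = c" by blast
    have "c = 0" using c[OF D0] K0 by simp
    hence Kz: "K z = - (lam * \<alpha> * z)" if "z \<in> D" for z using c[OF that] by (simp add: eq_neg_iff_add_eq_0)
    show ?thesis
    proof (intro exI conjI ballI)
      show "cmod (-\<alpha>) = 1" using \<alpha>(2) by simp
      fix z assume "z \<in> D"
      thus "g z = 1 - a2 * z + lam * (-\<alpha>) * z^2" using gK[of z] Kz[of z] by (simp add: power2_eq_square algebra_simps)
    qed
  next
    case False
    have Wlt: "cmod (W z) < 1" if "z \<in> D" for z
    proof (cases "z = 0")
      case True
      have "cmod (deriv H 0) \<le> 1" using Schwarz_Lemma(2)[OF holH H0 Hb, of 0] by simp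
      thus ?thesis using False True dHW by auto
    next
      case nz: False
      have z1: "cmod z < 1" using that by (simp add: D_def)
      have "cmod (H z) \<le> cmod z" using Schwarz_Lemma(1)[OF holH H0 Hb z1] .
      moreover have "cmod (H z) \<noteq> cmod z" using False z1 nz by blast
      ultimately have "cmod z * cmod (W z) < cmod z * 1" using HW[OF z1] by (simp add: norm_mult)
      thus ?thesis using nz by (simp add: mult_less_cancel_left)
    qed
    have half: "cball (0::complex) (1/2) \<subseteq> D" by (auto simp: D_def)
    have contW: "continuous_on (cball 0 (1/2)) W"
      using holW half holomorphic_on_imp_continuous_on continuous_on_subset by (metis D_def)
    obtain t0 where t0: "t0 \<in> cball 0 (1/2)" and t0max: "\<And>t. t \<in> cball 0 (1/2) \<Longrightarrow> cmod (W t) \<le> cmod (W t0)"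
      using continuous_attains_sup[OF compact_cball _ continuous_on_norm[OF contW]] by fastforce
    define m where "m = cmod (W t0)"
    have m1: "m < 1" unfolding m_def using Wlt t0 half by blast
    have m0: "0 \<le> m" unfolding m_def by simp
    define \<mu> where "\<mu> = (1 + m) / 2"
    have \<mu>1: "\<mu> < 1" and \<mu>0: "0 \<le> \<mu>" using m1 m0 by (auto simp: \<mu>_def)
    have Kb: "cmod (K z) \<le> lam * \<mu> * cmod z" if z: "z \<in> D" for z
    proof -
      have z2: "z / 2 \<in> cball 0 (1/2)" using z by (auto simp: D_def norm_divide)
      have b1: "cmod (K (z/2) - K 0) \<le> (lam * m) * cmod (z/2 - 0)"
      proof (rule field_differentiable_bound[OF convex_cball _ _ z2])
        fix t assume t: "t \<in> cball (0::complex) (1/2)"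
        show "(K has_field_derivative - lam * W t) (at t within cball 0 (1/2))"
          using DK[of t] t half by (meson has_field_derivative_at_within subsetD)
        show "cmod (- lam * W t) \<le> lam * m"
          using t0max[OF t] assms(1) by (simp add: norm_mult m_def mult_left_mono)
      qed auto
      have b2: "cmod (K z - K (z/2)) \<le> lam * cmod (z - z/2)"
      proof (rule field_differentiable_bound[OF cD _ _ z])
        fix t assume t: "t \<in> D"
        show "(K has_field_derivative - lam * W t) (at t within D)"
          using DK[OF t] by (auto intro: has_field_derivative_at_within)
        show "cmod (- lam * W t) \<le> lam"
          using Wlt[OF t] assms(1) by (simp add: norm_mult)
      next
        show "z / 2 \<in> D" using z2 half by blast
      qed
      have n2: "cmod (z/2) = cmod z / 2" "cmod (z - z/2) = cmod z / 2" by (simp_all add: norm_divide)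
      have "cmod (K z) \<le> cmod (K (z/2)) + cmod (K z - K (z/2))" by (metis norm_triangle_sub add.commute)
      also have "\<dots> \<le> lam * m * (cmod z / 2) + lam * (cmod z / 2)" using b1 b2 K0 n2 by simp
      also have "\<dots> = lam * \<mu> * cmod z" by (simp add: \<mu>_def field_simps)
      finally show ?thesis .
    qed
    define d where "d = lam * (1 - \<mu>) / 4"
    have \<mu>h: "1/2 \<le> \<mu>" using m0 by (simp add: \<mu>_def)
    have "lam * (1 - \<mu>) \<le> 1 * (1/2)" using assms(1,2) \<mu>h \<mu>1 by (intro mult_mono) auto
    hence d0: "0 < d" and d1: "d < 1/4" using assms(1,2) \<mu>1 unfolding d_def
      by (auto simp: mult_pos_pos)
    define r where "r = 1 - d"
    have r0: "0 < r" and r1: "r < 1" using d0 d1 by (auto simp: r_def)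
    have key: "r * (1 + lam - lam * \<mu> * r) \<ge> 1"
    proof -
      have e: "lam * (1 - \<mu>) = 4 * d" by (simp add: d_def)
      have "r * (1 + lam - lam * \<mu> * r) = (1 - d) * (1 + 4 * d + lam * \<mu> * d)"
        unfolding r_def d_def by (simp add: field_simps)
      also have "\<dots> \<ge> (1 - d) * (1 + 4 * d)"
        using d0 d1 assms(1) \<mu>0 by (intro mult_left_mono) auto
      finally have "(1 - d) * (1 + 4 * d) \<le> r * (1 + lam - lam * \<mu> * r)" .
      moreover have "(1 - d) * (1 + 4 * d) = 1 + d * (3 - 4 * d)" by (simp add: algebra_simps)
      moreover have "d * (3 - 4 * d) \<ge> 0" using d0 d1 by (intro mult_nonneg_nonneg) auto
      ultimately show ?thesis by linarith
    qed
    have rD: "cball 0 r \<subseteq> D" using r1 by (auto simp: D_def)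
    have lowb: "cmod (a2 - K z) \<ge> 1 + lam - lam * \<mu> * r" if z: "z \<in> cball 0 r" for z
    proof -
      have "cmod (K z) \<le> lam * \<mu> * cmod z" using Kb rD z by blast
      also have "\<dots> \<le> lam * \<mu> * r" using z assms(1) \<mu>0 by (intro mult_left_mono) auto
      finally have "cmod (K z) \<le> lam * \<mu> * r" .
      moreover have "cmod a2 - cmod (K z) \<le> cmod (a2 - K z)" by (rule norm_triangle_ineq2)
      ultimately show ?thesis using assms(4) unfolding a2_def by simp
    qed
    have "0 < r * (1 + lam - lam * \<mu> * r)" using key by linarith
    hence pos: "1 + lam - lam * \<mu> * r > 0" using r0 by (simp add: zero_less_mult_iff)
    have nzT: "a2 - K z \<noteq> 0" if "z \<in> cball 0 r" for z using lowb[OF that] pos by auto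
    define T where "T z = 1 / (a2 - K z)" for z
    have contK: "continuous_on (cball 0 r) K"
      using holK rD holomorphic_on_imp_continuous_on continuous_on_subset by (metis D_def)
    have contT: "continuous_on (cball 0 r) T"
      unfolding T_def using nzT contK by (intro continuous_intros) auto
    have mapT: "T \<in> cball 0 r \<rightarrow> cball 0 r"
    proof
      fix z assume z: "z \<in> cball (0::complex) r"
      have "cmod (T z) = 1 / cmod (a2 - K z)" by (simp add: T_def norm_divide)
      also have "\<dots> \<le> 1 / (1 + lam - lam * \<mu> * r)"
        using lowb[OF z] pos by (intro divide_left_mono mult_pos_pos) auto
      also have "\<dots> \<le> r" using key pos by (simp add: divide_le_eq mult.commute)
      finally show "T z \<in> cball 0 r" by simp
    qed
    obtain x where x: "x \<in> cball 0 r" and Tx: "T x = x" using brouwer_ball[OF r0 contT mapT] by blast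
    have "x * (a2 - K x) = 1" using Tx nzT[OF x] unfolding T_def by (metis divide_eq_eq mult.commute)
    hence "g x = 0" using gK[of x] x rD by (auto simp: algebra_simps)
    thus ?thesis using gnz x rD by blast
  qed
  then obtain c :: complex where c1: "cmod c = 1" and gc: "\<And>z::complex. z \<in> D \<Longrightarrow> g z = 1 - a2 * z + lam * c * z^2"
    by blast
  have "c \<noteq> 0" using c1 by auto
  define \<theta> where "\<theta> = Arg c"
  have e: "exp (\<i> * \<theta>) = c" unfolding \<theta>_def
    using cis_Arg[OF \<open>c \<noteq> 0\<close>] c1 by (simp add: cis_conv_exp sgn_div_norm)
  have part1: "\<forall>z\<in>unit_disc. f z = z / (1 - a2 * z + lam * exp (\<i> * \<theta>) * z^2)"
    using fg gc e by (simp add: D_def unit_disc_def)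
  obtain \<phi> :: real where \<phi>: "a2 = (1 + lam) * exp (\<i> * \<phi>)" "c = exp (2 * \<i> * \<phi>)"
    using quad_lemma[OF assms(1,2) _ c1, of a2] assms(4) gc gnz unfolding a2_def D_def by metis
  have part2: "\<forall>z\<in>unit_disc. f z = z / (1 - (1 + lam) * exp (\<i> * \<phi>) * z + lam * exp (2 * \<i> * \<phi>) * z^2)"
    using fg gc \<phi> by (simp add: D_def unit_disc_def)
  show ?thesis using part1 part2 unfolding a2_def by blast
qed
end
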